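(* Let $\{p_\eta:\eta>0\}$ be a minimal exponential family of densities $p_\eta(x)=h(x)e^{\eta T(x)-A(\eta)}$ whose log-partition function has the form $A(\eta)=c_1\log\eta+c_2$ with constants $c_1\neq0$, $c_2\in\mathbb{R}$, and let $\ell$ denote the logarithmic loss. Fix $\eta,\eta_2>0$ and set $x=-\frac{\eta_2}{\eta}\exp\!\big(-\frac{\eta_2}{\eta}\big)\in[-1/e,0)$. Then the set of $\eta_1>0$ for which $\ell(p_{\eta_1},p_\eta)-\ell(p_{\eta_2},p_\eta)=0$ is exactly $\{-\eta\,W_0(x),\,-\eta\,W_{-1}(x)\}$, where $W_0$ and $W_{-1}$ are the two real branches of the Lambert function (the real solutions $w$ of $w e^{w}=x$ for $x\in[-1/e,0)$).
   Context: $\ell(p_{\eta_1},p_\eta)=\mathbb{E}[-\log p_{\eta_1}(Y)]$ for $Y\sim p_\eta$. A single-parameter exponential family is minimal if $T$ is not almost everywhere constant. *)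

theory Defs
  imports "HOL-Analysis.Analysis"
begin

definition expfam :: "('a \<Rightarrow> real) \<Rightarrow> ('a \<Rightarrow> real) \<Rightarrow> (real \<Rightarrow> real) \<Rightarrow> real \<Rightarrow> 'a \<Rightarrow> real" where
  "expfam h T A eta x = h x * exp (eta * T x - A eta)"

definition log_loss :: "'a measure \<Rightarrow> ('a \<Rightarrow> real) \<Rightarrow> ('a \<Rightarrow> real) \<Rightarrow> real" where
  "log_loss M q p = (\<integral>y. - ln (q y) \<partial>(density M (\<lambda>x. ennreal (p x))))"

definition LambertW0 :: "real \<Rightarrow> real" where
  "LambertW0 x = (THE w. -1 \<le> w \<and> w * exp w = x)"

definition LambertWm1 :: "real \<Rightarrow> real" where
  "LambertWm1 x = (THE w. w \<le> -1 \<and> w * exp w = x)"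

end

theory Submission imports Defs "HOL-Real_Asymp.Real_Asymp" begin

lemma g_deriv: "((\<lambda>w::real. w * exp w) has_real_derivative (1 + w) * exp w) (at w)"
  by (auto intro!: derivative_eq_intros simp: algebra_simps)

lemma g_inc: fixes a b :: real assumes "-1 \<le> a" "a < b" shows "a * exp a < b * exp b"
proof -
  have "\<And>x. a < x \<Longrightarrow> x < b \<Longrightarrow> \<exists>y. DERIV (\<lambda>w. w * exp w) x :> y \<and> y > 0"
  proof -
    fix x assume "a < x" "x < b"
    hence "(1 + x) * exp x > 0" using assms by simp
    thus "\<exists>y. DERIV (\<lambda>w. w * exp w) x :> y \<and> y > 0" using g_deriv by blast
  qed
  moreover have "continuous_on {a..b} (\<lambda>w. w * exp w)" by (intro continuous_intros)
  ultimately show ?thesis using DERIV_pos_imp_increasing_open[of a b "\<lambda>w. w * exp w"] assms by blast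
qed

lemma g_dec: fixes a b :: real assumes "b \<le> -1" "a < b" shows "a * exp a > b * exp b"
proof -
  have "\<And>x. a < x \<Longrightarrow> x < b \<Longrightarrow> \<exists>y. DERIV (\<lambda>w. w * exp w) x :> y \<and> y < 0"
  proof -
    fix x assume "a < x" "x < b"
    hence "(1 + x) * exp x < 0" using assms by (simp add: mult_neg_pos)
    thus "\<exists>y. DERIV (\<lambda>w. w * exp w) x :> y \<and> y < 0" using g_deriv by blast
  qed
  moreover have "continuous_on {a..b} (\<lambda>w. w * exp w)" by (intro continuous_intros)
  ultimately show ?thesis using DERIV_neg_imp_decreasing_open[of a b "\<lambda>w. w * exp w"] assms by blast
qed

lemma g_inj_up: fixes u v :: real
  assumes "-1 \<le> u" "-1 \<le> v" "u * exp u = v * exp v" shows "u = v"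
proof (rule ccontr)
  assume "u \<noteq> v"
  hence "u < v \<or> v < u" by linarith
  thus False using g_inc[of u v] g_inc[of v u] assms by auto
qed

lemma g_inj_down: fixes u v :: real
  assumes "u \<le> -1" "v \<le> -1" "u * exp u = v * exp v" shows "u = v"
proof (rule ccontr)
  assume "u \<noteq> v"
  hence "u < v \<or> v < u" by linarith
  thus False using g_dec[of v u] g_dec[of u v] assms by auto
qed

lemma lam_sols:
  fixes x :: real assumes x: "- exp (-1) \<le> x" "x < 0"
  shows "-1 \<le> LambertW0 x \<and> LambertW0 x * exp (LambertW0 x) = x"
    "LambertWm1 x \<le> -1 \<and> LambertWm1 x * exp (LambertWm1 x) = x"
proof -
  have ex0: "\<exists>w. -1 \<le> w \<and> w * exp w = x"
  proof -
    have "\<exists>w\<ge>-1. w \<le> 0 \<and> w * exp w = x"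
      by (rule IVT) (use x in \<open>auto intro!: continuous_intros\<close>)
    then show ?thesis by auto
  qed
  show "-1 \<le> LambertW0 x \<and> LambertW0 x * exp (LambertW0 x) = x"
    unfolding LambertW0_def by (rule theI') (use ex0 g_inj_up in blast)
  have lim: "((\<lambda>w::real. w * exp w) \<longlongrightarrow> 0) at_bot" by real_asymp
  hence "eventually (\<lambda>w. w * exp w > x) at_bot"
    using x(2) by (simp add: order_tendstoD(1))
  then obtain w0 where w0: "\<And>w. w \<le> w0 \<Longrightarrow> w * exp w > x" by (auto simp: eventually_at_bot_linorder)
  define a where "a = min w0 (-1)"
  have a: "a \<le> -1" "a * exp a > x" using w0 by (auto simp: a_def)
  have exm: "\<exists>w. w \<le> -1 \<and> w * exp w = x"
  proof -
    have "\<exists>w\<ge>a. w \<le> -1 \<and> w * exp w = x"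
      by (rule IVT2) (use x a in \<open>auto intro!: continuous_intros\<close>)
    then show ?thesis by auto
  qed
  show "LambertWm1 x \<le> -1 \<and> LambertWm1 x * exp (LambertWm1 x) = x"
    unfolding LambertWm1_def by (rule theI') (use exm g_inj_down in blast)
qed

lemma lam_iff:
  fixes x w :: real assumes x: "- exp (-1) \<le> x" "x < 0"
  shows "w * exp w = x \<longleftrightarrow> w = LambertW0 x \<or> w = LambertWm1 x"
proof
  assume h: "w * exp w = x"
  show "w = LambertW0 x \<or> w = LambertWm1 x"
  proof (cases "-1 \<le> w")
    case True thus ?thesis using lam_sols[OF x] h g_inj_up[of w "LambertW0 x"] by auto
  next
    case False thus ?thesis using lam_sols[OF x] h g_inj_down[of w "LambertWm1 x"] by auto
  qed
qed (use lam_sols[OF x] in auto)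

lemma lam_neg: fixes w :: real shows "w * exp w < 0 \<Longrightarrow> w < 0"
proof (rule ccontr)
  assume "w * exp w < 0" "\<not> w < 0"
  hence "0 \<le> w * exp w" by simp
  thus False using \<open>w * exp w < 0\<close> by simp
qed

lemma x_range: assumes "0 < (r::real)" shows "- exp (-1) \<le> - r * exp (- r)" "- r * exp (-r) < 0"
proof -
  have "r * exp (-r) \<le> exp (-1)"
  proof (cases "r < 1")
    case True thus ?thesis using g_inc[of "-1" "-r"] assms by auto
  next
    case False
    show ?thesis
    proof (cases "r = 1")
      case False
      hence "-r < -1" using \<open>\<not> r < 1\<close> by linarith
      from g_dec[OF _ this] have "(-r) * exp (-r) > (-1) * exp (-1)" by simp
      thus ?thesis by simp
    qed simp
  qed
  thus "- exp (-1) \<le> - r * exp (- r)" by simp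
  show "- r * exp (-r) < 0" using assms by simp
qed

theorem theorem6:
  fixes M :: "'a measure" and h T :: "'a \<Rightarrow> real" and A :: "real \<Rightarrow> real"
    and c1 c2 eta eta2 :: real
  assumes h_meas: "h \<in> borel_measurable M"
    and T_meas: "T \<in> borel_measurable M"
    and h_nonneg: "\<And>x. x \<in> space M \<Longrightarrow> 0 \<le> h x"
    and dens: "\<And>e. 0 < e \<Longrightarrow> integrable M (expfam h T A e) \<and> (\<integral>x. expfam h T A e x \<partial>M) = 1"
    and minimal: "\<not> (\<exists>c. AE x in M. T x = c)"
    and A_form: "\<And>e. 0 < e \<Longrightarrow> A e = c1 * ln e + c2"
    and c1_ne: "c1 \<noteq> 0"
    and loss_finite: "\<And>e e1. 0 < e \<Longrightarrow> 0 < e1 \<Longrightarrow>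
          integrable (density M (\<lambda>x. ennreal (expfam h T A e x))) (\<lambda>y. - ln (expfam h T A e1 y))"
    and eta_pos: "0 < eta" and eta2_pos: "0 < eta2"
  shows "{eta1. 0 < eta1 \<and>
            log_loss M (expfam h T A eta1) (expfam h T A eta)
            - log_loss M (expfam h T A eta2) (expfam h T A eta) = 0}
         = (let x = - (eta2 / eta) * exp (- (eta2 / eta))
            in {- eta * LambertW0 x, - eta * LambertWm1 x})"
proof -
  define p where "p = expfam h T A"
  note [measurable] = h_meas T_meas
  have pm[measurable]: "p t \<in> borel_measurable M" for t unfolding p_def expfam_def by measurable
  have pnn: "x \<in> space M \<Longrightarrow> 0 \<le> p t x" for t x
    unfolding p_def expfam_def using h_nonneg by simp
  have pae: "AE x in M. 0 \<le> p eta x" using pnn by auto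
  define P where "P = density M (\<lambda>x. ennreal (p eta x))"
  define F where "F t x = p eta x * (- ln (p t x))" for t x
  define L where "L t = log_loss M (p t) (p eta)" for t
  have LF: "L t = integral\<^sup>L M (F t)" for t
    unfolding L_def log_loss_def F_def
    by (subst integral_density) (use pae in auto)
  have Fint: "0 < t \<Longrightarrow> integrable M (F t)" for t
    using loss_finite[OF eta_pos, of t] unfolding F_def p_def[symmetric]
    by (subst (asm) integrable_density) (use pae in auto)
  have Fdiff: "F t x - F eta x = p eta x * (-(t - eta) * T x + (A t - A eta))"
    if "x \<in> space M" for t x
  proof (cases "h x = 0")
    case True thus ?thesis by (simp add: F_def p_def expfam_def)
  next
    case False
    hence hp: "h x > 0" using h_nonneg[OF that] by simp
    have l: "ln (p s x) = ln (h x) + (s * T x - A s)" for s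
      unfolding p_def expfam_def using hp by (simp add: ln_mult)
    show ?thesis unfolding F_def l[of t] l[of eta] by (simp add: algebra_simps)
  qed
  define G where "G x = p eta x * T x" for x
  have pint: "0 < t \<Longrightarrow> integrable M (p t)" for t using dens unfolding p_def by blast
  have pone: "0 < t \<Longrightarrow> integral\<^sup>L M (p t) = 1" for t using dens unfolding p_def by blast
  have Gint: "integrable M G"
  proof -
    have "integrable M (\<lambda>x. (A (eta+1) - A eta) * p eta x - (F (eta+1) x - F eta x))"
      using Fint[of "eta+1"] Fint[of eta] pint[of eta] eta_pos by auto
    moreover have "x \<in> space M \<Longrightarrow> (A (eta+1) - A eta) * p eta x - (F (eta+1) x - F eta x) = G x" for x
      using Fdiff[of x "eta+1"] by (simp add: G_def algebra_simps)
    ultimately show ?thesis using Bochner_Integration.integrable_cong[OF refl, of M "\<lambda>x. (A (eta+1) - A eta) * p eta x - (F (eta+1) x - F eta x)" G] by auto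
  qed
  define m where "m = integral\<^sup>L M G"
  have Ldiff: "L t - L eta = -(t - eta) * m + (A t - A eta)" if "0 < t" for t
  proof -
    have "L t - L eta = integral\<^sup>L M (\<lambda>x. F t x - F eta x)"
      using Fint[OF that] Fint[OF eta_pos] by (simp add: LF)
    also have "\<dots> = integral\<^sup>L M (\<lambda>x. -(t - eta) * G x + (A t - A eta) * p eta x)"
      by (rule Bochner_Integration.integral_cong) (auto simp: Fdiff G_def algebra_simps)
    also have "\<dots> = -(t - eta) * m + (A t - A eta)"
      using Gint pint[OF eta_pos] pone[OF eta_pos] by (simp add: m_def)
    finally show ?thesis .
  qed
  have gibbs: "0 \<le> -(t - eta) * m + (A t - A eta)" if "0 < t" for t
  proof -
    have "0 = integral\<^sup>L M (\<lambda>x. p eta x - p t x)"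
      using pint[OF that] pint[OF eta_pos] pone[OF that] pone[OF eta_pos] by simp
    also have "\<dots> \<le> integral\<^sup>L M (\<lambda>x. -(t - eta) * G x + (A t - A eta) * p eta x)"
    proof (rule integral_mono)
      show "integrable M (\<lambda>x. p eta x - p t x)" using pint[OF that] pint[OF eta_pos] by auto
      show "integrable M (\<lambda>x. -(t - eta) * G x + (A t - A eta) * p eta x)"
        using Gint pint[OF eta_pos] by auto
      fix x assume x: "x \<in> space M"
      define s where "s = (t - eta) * T x - (A t - A eta)"
      have pt: "p t x = p eta x * exp s"
      proof -
        have "exp (t * T x - A t) = exp (eta * T x - A eta) * exp s"
          unfolding s_def mult_exp_exp by (simp add: algebra_simps)
        thus ?thesis unfolding p_def expfam_def by simp
      qed
      have "1 - exp s \<le> - s" using exp_ge_add_one_self[of s] by linarith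
      hence "p eta x * (1 - exp s) \<le> p eta x * (- s)"
        using pnn[OF x] by (rule mult_left_mono)
      thus "p eta x - p t x \<le> -(t - eta) * G x + (A t - A eta) * p eta x"
        by (simp add: pt G_def s_def algebra_simps)
    qed
    also have "\<dots> = -(t - eta) * m + (A t - A eta)"
      using Gint pint[OF eta_pos] pone[OF eta_pos] by (simp add: m_def)
    finally show ?thesis .
  qed
  define phi where "phi t = -(t - eta) * m + (c1 * ln t - c1 * ln eta)" for t
  have phi_nn: "0 < t \<Longrightarrow> 0 \<le> phi t" for t
    using gibbs[of t] A_form[of t] A_form[OF eta_pos] by (simp add: phi_def)
  have dphi: "DERIV phi eta :> (-m + c1 / eta)"
    unfolding phi_def using eta_pos
    by (auto intro!: derivative_eq_intros simp: field_simps)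
  have "-m + c1 / eta = 0"
  proof (rule DERIV_local_min[OF dphi eta_pos], intro allI impI)
    fix y assume "\<bar>eta - y\<bar> < eta"
    hence "0 < y" by linarith
    thus "phi eta \<le> phi y" using phi_nn[of y] by (simp add: phi_def)
  qed
  hence mval: "m = c1 / eta" by simp
  define x where "x = - (eta2 / eta) * exp (- (eta2 / eta))"
  have xr: "- exp (-1) \<le> x" "x < 0"
    using x_range[of "eta2/eta"] eta_pos eta2_pos by (auto simp: x_def)
  have key: "(L e1 - L eta2 = 0) \<longleftrightarrow> (- e1 / eta) * exp (- e1 / eta) = x" if e1: "0 < e1" for e1
  proof -
    have "L e1 - L eta2 = (L e1 - L eta) - (L eta2 - L eta)" by simp
    also have "\<dots> = c1 * ((ln e1 - e1 / eta) - (ln eta2 - eta2 / eta))"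
    proof -
      have a: "L e1 - L eta = -(e1 - eta) * (c1 / eta) + (c1 * ln e1 - c1 * ln eta)"
        using Ldiff[OF e1] A_form[OF e1] A_form[OF eta_pos] by (simp add: mval)
      have b: "L eta2 - L eta = -(eta2 - eta) * (c1 / eta) + (c1 * ln eta2 - c1 * ln eta)"
        using Ldiff[OF eta2_pos] A_form[OF eta2_pos] A_form[OF eta_pos] by (simp add: mval)
      have c: "(u - eta) * (c1 / eta) = c1 * (u / eta) - c1" for u
        using eta_pos by (simp add: field_simps)
      have a': "L e1 - L eta = -(c1 * (e1 / eta) - c1) + (c1 * ln e1 - c1 * ln eta)"
        using a c[of e1] minus_mult_left[of "e1 - eta" "c1 / eta"] by linarith
      have b': "L eta2 - L eta = -(c1 * (eta2 / eta) - c1) + (c1 * ln eta2 - c1 * ln eta)"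
        using b c[of eta2] minus_mult_left[of "eta2 - eta" "c1 / eta"] by linarith
      have d: "c1 * ((ln e1 - e1 / eta) - (ln eta2 - eta2 / eta)) = c1 * ln e1 - c1 * (e1 / eta) - c1 * ln eta2 + c1 * (eta2 / eta)"
        by (simp add: ring_distribs)
      show ?thesis using a' b' d by linarith
    qed
    finally have "(L e1 - L eta2 = 0) \<longleftrightarrow> ln e1 - e1 / eta = ln eta2 - eta2 / eta"
      using c1_ne by simp
    also have "\<dots> \<longleftrightarrow> exp (ln e1 - e1 / eta) = exp (ln eta2 - eta2 / eta)" by simp
    also have "\<dots> \<longleftrightarrow> e1 * exp (- e1 / eta) = eta2 * exp (- eta2 / eta)"
    proof -
      have ex: "exp (ln u - u / eta) = u * exp (- u / eta)" if "0 < u" for u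
        using that by (simp add: exp_diff exp_minus divide_inverse)
      show ?thesis unfolding ex[OF e1] ex[OF eta2_pos] ..
    qed
    also have "\<dots> \<longleftrightarrow> (- e1 / eta) * exp (- e1 / eta) = (- eta2 / eta) * exp (- eta2 / eta)"
    proof -
      have q: "(- u / eta) * exp (- u / eta) = (u * exp (- u / eta)) * (- 1 / eta)" for u
        by (simp add: field_simps)
      have ne: "(- 1 / eta) \<noteq> 0" using eta_pos by simp
      show ?thesis unfolding q using ne by simp
    qed
    also have "(- eta2 / eta) * exp (- eta2 / eta) = x" unfolding x_def by simp
    finally show ?thesis .
  qed
  have "{eta1. 0 < eta1 \<and> L eta1 - L eta2 = 0} = {- eta * LambertW0 x, - eta * LambertWm1 x}"
  proof (rule set_eqI)
    fix e1
    define w where "w = - e1 / eta"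
    have e1w: "e1 = - eta * w" using eta_pos by (simp add: w_def)
    have "e1 \<in> {eta1. 0 < eta1 \<and> L eta1 - L eta2 = 0} \<longleftrightarrow> w * exp w = x"
    proof
      assume "e1 \<in> {eta1. 0 < eta1 \<and> L eta1 - L eta2 = 0}"
      hence "0 < e1" "L e1 - L eta2 = 0" by auto
      thus "w * exp w = x" using key[of e1] unfolding w_def by blast
    next
      assume wx: "w * exp w = x"
      hence "w < 0" using lam_neg[of w] xr(2) by linarith
      hence "0 < e1" using e1w eta_pos mult_pos_neg[OF eta_pos, of w] by linarith
      moreover have "L e1 - L eta2 = 0" using key[OF \<open>0 < e1\<close>] wx unfolding w_def by blast
      ultimately show "e1 \<in> {eta1. 0 < eta1 \<and> L eta1 - L eta2 = 0}" by blast
    qed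
    also have "\<dots> \<longleftrightarrow> w = LambertW0 x \<or> w = LambertWm1 x" by (rule lam_iff[OF xr])
    also have "\<dots> \<longleftrightarrow> e1 \<in> {- eta * LambertW0 x, - eta * LambertWm1 x}"
      using eta_pos e1w by auto
    finally show "e1 \<in> {eta1. 0 < eta1 \<and> L eta1 - L eta2 = 0} \<longleftrightarrow>
        e1 \<in> {- eta * LambertW0 x, - eta * LambertWm1 x}" .
  qed
  thus ?thesis unfolding Let_def L_def p_def x_def by (simp only:)
qed

end
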